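(* Let $G$ be a group, $\varphi\colon A\to B$ an isomorphism between subgroups of $G$, $G^*=\langle G,t\mid t^{-1}at=\varphi(a),\ a\in A\rangle$ the HNN extension, and $H=H(G,\varphi)$. Then $H$ is the largest subgroup of $G$ with $\varphi(H)=H$, and, as subgroups of $G^*$, $H=\bigcap_{i\in\mathbb{Z}}t^{-i}Gt^{i}$. Moreover $H=\{g\in G:\ \varphi^j(g)\text{ is defined for all } j\in\mathbb{Z}\}$. If $A$ is finite, then there exists an integer $r\ge 0$ such that for every $s\ge r$ we have $H=\{g\in G:\ \varphi^j(g)\text{ is defined for } j=0,\dots,s\}$.
   Context: The core $H(G,\varphi)$ is $\bigcap_k H_k$ where $H_0=A\cap B$ and $H_{k+1}=\varphi^{-1}(H_k)\cap H_k\cap\varphi(H_k)$ (with $\varphi^{-1}(H_k)=\{a\in A:\varphi(a)\in H_k\}$). For $g\in G$ and $n\in\mathbb{N}$, "$\varphi^n(g)$ is defined" means $g$ lies in the domain of the $n$-fold composite of $\varphi$ regarded as a partially defined map $G\to G$, and "$\varphi^{-n}(g)$ is defined" means $g$ lies in the domain of the $n$-fold composite of $\varphi^{-1}\colon B\to A$ regarded as a partial map; $\varphi^0(g)$ is always defined. $G$ is regarded as a subgroup of $G^*$. *)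

theory Defs
  imports "HOL-Algebra.Algebra"
begin

text \<open>phi is a map A -> B, represented as a total HOL function whose values
  outside A are irrelevant.\<close>

fun hnn_core_seq :: "'g set \<Rightarrow> 'g set \<Rightarrow> ('g \<Rightarrow> 'g) \<Rightarrow> nat \<Rightarrow> 'g set" where
  "hnn_core_seq A B phi 0 = A \<inter> B"
| "hnn_core_seq A B phi (Suc k) =
     {a \<in> A. phi a \<in> hnn_core_seq A B phi k} \<inter> hnn_core_seq A B phi k
       \<inter> phi ` hnn_core_seq A B phi k"

definition hnn_core :: "'g set \<Rightarrow> 'g set \<Rightarrow> ('g \<Rightarrow> 'g) \<Rightarrow> 'g set" where
  "hnn_core A B phi = (\<Inter>k. hnn_core_seq A B phi k)"

text \<open>phi_pos_defined A phi n g: g lies in the domain of the n-fold composite of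
  phi : A -> B regarded as a partial map G -> G.\<close>
fun phi_pos_defined :: "'g set \<Rightarrow> ('g \<Rightarrow> 'g) \<Rightarrow> nat \<Rightarrow> 'g \<Rightarrow> bool" where
  "phi_pos_defined A phi 0 g = True"
| "phi_pos_defined A phi (Suc n) g = (g \<in> A \<and> phi_pos_defined A phi n (phi g))"

text \<open>phi_neg_defined A B phi n g: g lies in the domain of the n-fold composite
  of phi^-1 : B -> A regarded as a partial map.\<close>
fun phi_neg_defined :: "'g set \<Rightarrow> 'g set \<Rightarrow> ('g \<Rightarrow> 'g) \<Rightarrow> nat \<Rightarrow> 'g \<Rightarrow> bool" where
  "phi_neg_defined A B phi 0 g = True"
| "phi_neg_defined A B phi (Suc n) g =
     (g \<in> B \<and> phi_neg_defined A B phi n (inv_into A phi g))"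

definition phi_defined :: "'g set \<Rightarrow> 'g set \<Rightarrow> ('g \<Rightarrow> 'g) \<Rightarrow> int \<Rightarrow> 'g \<Rightarrow> bool" where
  "phi_defined A B phi j g =
     (if 0 \<le> j then phi_pos_defined A phi (nat j) g
      else phi_neg_defined A B phi (nat (- j)) g)"

text \<open>Defined by its presentation: words in the letters g (g in G), t, t^-1,
  modulo the congruence generated by the multiplication table of G, the
  free-group relations for t, and the HNN relations t^-1 a t = phi(a).\<close>

datatype 'g hnn_letter = Gen 'g | T | Tinv

definition hnn_words :: "('g, 'b) monoid_scheme \<Rightarrow> 'g hnn_letter list set" where
  "hnn_words G = {w. \<forall>x \<in> set w. \<forall>g. x = Gen g \<longrightarrow> g \<in> carrier G}"

inductive hnn_eq :: "('g, 'b) monoid_scheme \<Rightarrow> 'g set \<Rightarrow> ('g \<Rightarrow> 'g)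
    \<Rightarrow> 'g hnn_letter list \<Rightarrow> 'g hnn_letter list \<Rightarrow> bool"
  for G A phi where
  hnn_refl: "w \<in> hnn_words G \<Longrightarrow> hnn_eq G A phi w w"
| hnn_sym: "hnn_eq G A phi u v \<Longrightarrow> hnn_eq G A phi v u"
| hnn_trans: "hnn_eq G A phi u v \<Longrightarrow> hnn_eq G A phi v w \<Longrightarrow> hnn_eq G A phi u w"
| hnn_ctxt: "hnn_eq G A phi u v \<Longrightarrow> p \<in> hnn_words G \<Longrightarrow> q \<in> hnn_words G
    \<Longrightarrow> hnn_eq G A phi (p @ u @ q) (p @ v @ q)"
| hnn_mult: "g \<in> carrier G \<Longrightarrow> h \<in> carrier G
    \<Longrightarrow> hnn_eq G A phi [Gen g, Gen h] [Gen (g \<otimes>\<^bsub>G\<^esub> h)]"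
| hnn_one: "hnn_eq G A phi [Gen \<one>\<^bsub>G\<^esub>] []"
| hnn_t_tinv: "hnn_eq G A phi [T, Tinv] []"
| hnn_tinv_t: "hnn_eq G A phi [Tinv, T] []"
| hnn_rel: "a \<in> A \<Longrightarrow> hnn_eq G A phi [Tinv, Gen a, T] [Gen (phi a)]"

definition hnn_class :: "('g, 'b) monoid_scheme \<Rightarrow> 'g set \<Rightarrow> ('g \<Rightarrow> 'g)
    \<Rightarrow> 'g hnn_letter list \<Rightarrow> 'g hnn_letter list set" where
  "hnn_class G A phi w = {v. hnn_eq G A phi w v}"

definition hnn_mult :: "('g, 'b) monoid_scheme \<Rightarrow> 'g set \<Rightarrow> ('g \<Rightarrow> 'g)
    \<Rightarrow> 'g hnn_letter list set \<Rightarrow> 'g hnn_letter list set \<Rightarrow> 'g hnn_letter list set" where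
  "hnn_mult G A phi U V = hnn_class G A phi ((SOME u. u \<in> U) @ (SOME v. v \<in> V))"

definition HNN :: "('g, 'b) monoid_scheme \<Rightarrow> 'g set \<Rightarrow> ('g \<Rightarrow> 'g)
    \<Rightarrow> 'g hnn_letter list set monoid" where
  "HNN G A phi =
    \<lparr>carrier = hnn_class G A phi ` hnn_words G,
     monoid.mult = hnn_mult G A phi,
     one = hnn_class G A phi []\<rparr>"

definition hnn_emb :: "('g, 'b) monoid_scheme \<Rightarrow> 'g set \<Rightarrow> ('g \<Rightarrow> 'g)
    \<Rightarrow> 'g \<Rightarrow> 'g hnn_letter list set" where
  "hnn_emb G A phi g = hnn_class G A phi [Gen g]"

definition hnn_t :: "('g, 'b) monoid_scheme \<Rightarrow> 'g set \<Rightarrow> ('g \<Rightarrow> 'g)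
    \<Rightarrow> 'g hnn_letter list set" where
  "hnn_t G A phi = hnn_class G A phi [T]"

end

theory Submission
  imports Defs
begin


lemma pd_Suc_right:
  "phi_pos_defined A phi (Suc n) g \<longleftrightarrow> phi_pos_defined A phi n g \<and> (phi ^^ n) g \<in> A"
proof (induction n arbitrary: g)
  case 0 then show ?case by simp
next
  case (Suc n)
  have eq: "(phi ^^ Suc n) g = (phi ^^ n) (phi g)" by (simp only: funpow_Suc_right comp_apply)
  show ?case unfolding eq phi_pos_defined.simps(2)[of A phi "Suc n" g] Suc[of "phi g"]
      phi_pos_defined.simps(2)[of A phi n g] by blast
qed

lemma nd_Suc_right:
  "phi_neg_defined A B phi (Suc n) g \<longleftrightarrow> phi_neg_defined A B phi n g \<and> (inv_into A phi ^^ n) g \<in> B"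
proof (induction n arbitrary: g)
  case 0 then show ?case by simp
next
  case (Suc n)
  have eq: "(inv_into A phi ^^ Suc n) g = (inv_into A phi ^^ n) (inv_into A phi g)" by (simp only: funpow_Suc_right comp_apply)
  show ?case unfolding eq phi_neg_defined.simps(2)[of A B phi "Suc n" g] Suc[of "inv_into A phi g"]
      phi_neg_defined.simps(2)[of A B phi n g] by blast
qed

lemma pd_mono: "phi_pos_defined A phi (Suc n) g \<Longrightarrow> phi_pos_defined A phi n g"
  using pd_Suc_right[of A phi n g] by blast

lemma nd_mono: "phi_neg_defined A B phi (Suc n) g \<Longrightarrow> phi_neg_defined A B phi n g"
  using nd_Suc_right[of A B phi n g] by blast

lemma pd_mono': "phi_pos_defined A phi n g \<Longrightarrow> m \<le> n \<Longrightarrow> phi_pos_defined A phi m g"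
proof (induction n)
  case 0 then show ?case by simp
next
  case (Suc n)
  show ?case
  proof (cases "m = Suc n")
    case True then show ?thesis using Suc by simp
  next
    case False then have "m \<le> n" using Suc by simp
    moreover have "phi_pos_defined A phi n g" using Suc.prems(1) by (rule pd_mono)
    ultimately show ?thesis using Suc.IH by blast
  qed
qed

locale hnn_loc = group G for G :: "'g monoid" (structure) +
  fixes A B :: "'g set" and phi :: "'g \<Rightarrow> 'g"
  assumes subA: "subgroup A G" and subB: "subgroup B G"
    and hom: "phi \<in> hom (G\<lparr>carrier := A\<rparr>) (G\<lparr>carrier := B\<rparr>)"
    and bij: "bij_betw phi A B"
begin

definition psi where "psi = inv_into A phi"

lemma A_carr: "A \<subseteq> carrier G" by (rule subgroup.subset[OF subA])
lemma B_carr: "B \<subseteq> carrier G" by (rule subgroup.subset[OF subB])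
lemma one_A: "\<one> \<in> A" by (rule subgroup.one_closed[OF subA])
lemma one_B: "\<one> \<in> B" by (rule subgroup.one_closed[OF subB])
lemma mA: "x \<in> A \<Longrightarrow> y \<in> A \<Longrightarrow> x \<otimes> y \<in> A" by (rule subgroup.m_closed[OF subA])
lemma mB: "x \<in> B \<Longrightarrow> y \<in> B \<Longrightarrow> x \<otimes> y \<in> B" by (rule subgroup.m_closed[OF subB])
lemma iA: "x \<in> A \<Longrightarrow> inv x \<in> A" by (rule subgroup.m_inv_closed[OF subA])
lemma iB: "x \<in> B \<Longrightarrow> inv x \<in> B" by (rule subgroup.m_inv_closed[OF subB])

lemma phiB: "a \<in> A \<Longrightarrow> phi a \<in> B" using bij bij_betwE by blast
lemma psiA: "b \<in> B \<Longrightarrow> psi b \<in> A"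
  unfolding psi_def by (metis bij bij_betw_def inv_into_into)
lemma phi_psi: "b \<in> B \<Longrightarrow> phi (psi b) = b"
  unfolding psi_def by (metis bij bij_betw_def f_inv_into_f)
lemma psi_phi: "a \<in> A \<Longrightarrow> psi (phi a) = a"
  unfolding psi_def by (metis bij bij_betw_def inv_into_f_f)
lemma phi_inj: "a \<in> A \<Longrightarrow> a' \<in> A \<Longrightarrow> phi a = phi a' \<Longrightarrow> a = a'"
  by (metis psi_phi)

lemma phi_mult: "a \<in> A \<Longrightarrow> a' \<in> A \<Longrightarrow> phi (a \<otimes> a') = phi a \<otimes> phi a'"
  using hom_mult[OF hom, of a a'] by simp

lemma phi_one: "phi \<one> = \<one>"
proof -
  have "phi \<one> \<otimes> phi \<one> = phi \<one> \<otimes> \<one>"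
    using phi_mult[OF one_A one_A] phiB[OF one_A] B_carr by auto
  thus ?thesis using phiB[OF one_A] B_carr l_cancel by blast
qed

lemma phi_inv: "a \<in> A \<Longrightarrow> phi (inv a) = inv (phi a)"
proof -
  assume a: "a \<in> A"
  have "phi (inv a) \<otimes> phi a = \<one>"
    using phi_mult[OF iA[OF a] a] a A_carr phi_one by auto
  thus ?thesis using a phiB iA B_carr inv_equality by (metis subsetD)
qed

lemma psi_mult: "b \<in> B \<Longrightarrow> b' \<in> B \<Longrightarrow> psi (b \<otimes> b') = psi b \<otimes> psi b'"
  by (metis phi_psi psi_phi phi_mult psiA mA)

lemma psi_one: "psi \<one> = \<one>"
  by (metis one_A phi_one psi_phi)

lemma psi_inv: "b \<in> B \<Longrightarrow> psi (inv b) = inv (psi b)"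
  by (metis phi_psi psi_phi phi_inv psiA iA)

abbreviation pd where "pd \<equiv> phi_pos_defined A phi"
abbreviation nd where "nd \<equiv> phi_neg_defined A B phi"

lemma nd_Suc: "nd (Suc n) g \<longleftrightarrow> g \<in> B \<and> nd n (psi g)"
  by (simp add: psi_def)

declare phi_neg_defined.simps(2)[simp del] nd_Suc[simp]

definition Hc where "Hc = {g. \<forall>n. pd n g \<and> nd n g}"

lemma HcD: "g \<in> Hc \<Longrightarrow> pd n g \<and> nd n g"
  unfolding Hc_def by blast

lemma HcI: "(\<And>n. pd n g \<and> nd n g) \<Longrightarrow> g \<in> Hc"
  unfolding Hc_def by blast

lemma Hc_A: assumes "g \<in> Hc" shows "g \<in> A"
proof -
  have "pd (Suc 0) g" using HcD[OF assms] by blast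
  thus ?thesis by simp
qed

lemma Hc_B: assumes "g \<in> Hc" shows "g \<in> B"
proof -
  have "nd (Suc 0) g" using HcD[OF assms] by blast
  thus ?thesis unfolding nd_Suc by blast
qed

lemma Hc_phi: assumes g: "g \<in> Hc" shows "phi g \<in> Hc"
proof (rule HcI)
  fix n
  have gA: "g \<in> A" by (rule Hc_A[OF g])
  have "pd (Suc n) g" using HcD[OF g] by blast
  hence 1: "pd n (phi g)" by simp
  have "nd n g" using HcD[OF g] by blast
  hence "nd (Suc n) (phi g)" unfolding nd_Suc using phiB[OF gA] psi_phi[OF gA] by simp
  hence "nd n (phi g)" by (rule nd_mono)
  with 1 show "pd n (phi g) \<and> nd n (phi g)" by blast
qed

lemma Hc_psi: assumes g: "g \<in> Hc" shows "psi g \<in> Hc"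
proof (rule HcI)
  fix n
  have gB: "g \<in> B" by (rule Hc_B[OF g])
  have "nd (Suc n) g" using HcD[OF g] by blast
  hence 1: "nd n (psi g)" unfolding nd_Suc by blast
  have "pd n g" using HcD[OF g] by blast
  hence "pd (Suc n) (psi g)" using psiA[OF gB] phi_psi[OF gB] by simp
  hence "pd n (psi g)" by (rule pd_mono)
  with 1 show "pd n (psi g) \<and> nd n (psi g)" by blast
qed

lemma Hc_max: assumes "K \<subseteq> A" "phi ` K = K" shows "K \<subseteq> Hc"
proof -
  have "\<forall>g\<in>K. pd n g \<and> nd n g" for n
  proof (induction n)
    case 0 then show ?case by simp
  next
    case (Suc n)
    show ?case
    proof
      fix g assume g: "g \<in> K"
      have gA: "g \<in> A" using g assms by blast
      have "phi g \<in> K" using g assms by blast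
      then have 1: "pd (Suc n) g" using Suc gA by simp
      from g assms obtain k where k: "k \<in> K" "g = phi k" by blast
      have "g \<in> B" using k assms phiB by blast
      moreover have "psi g = k" using k assms psi_phi by blast
      ultimately have "nd (Suc n) g" using Suc k nd_Suc by metis
      with 1 show "pd (Suc n) g \<and> nd (Suc n) g" by blast
    qed
  qed
  thus ?thesis unfolding Hc_def by blast
qed

lemma Hc_sub_A: "Hc \<subseteq> A" using Hc_A by blast

lemma Hc_image: "phi ` Hc = Hc"
proof
  show "phi ` Hc \<subseteq> Hc" using Hc_phi by blast
  show "Hc \<subseteq> phi ` Hc"
  proof
    fix g assume "g \<in> Hc"
    then have "g = phi (psi g)" "psi g \<in> Hc" using Hc_B phi_psi Hc_psi by auto
    thus "g \<in> phi ` Hc" by blast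
  qed
qed

lemma Hc_one: "\<one> \<in> Hc"
  using Hc_max[of "{\<one>}"] one_A phi_one by auto

lemma Hc_mult_aux: "\<forall>g h. g \<in> Hc \<longrightarrow> h \<in> Hc \<longrightarrow> pd n (g \<otimes> h) \<and> nd n (g \<otimes> h)"
proof (induction n)
  case 0 then show ?case by simp
next
  case (Suc n)
  show ?case
  proof (intro allI impI)
    fix g h assume g: "g \<in> Hc" and h: "h \<in> Hc"
    have "pd n (phi g \<otimes> phi h) \<and> nd n (psi g \<otimes> psi h)"
      using Suc g h Hc_phi Hc_psi by blast
    moreover have "g \<otimes> h \<in> A" "g \<otimes> h \<in> B" "phi (g \<otimes> h) = phi g \<otimes> phi h"
      "psi (g \<otimes> h) = psi g \<otimes> psi h"
      using g h Hc_A Hc_B mA mB phi_mult psi_mult by auto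
    ultimately show "pd (Suc n) (g \<otimes> h) \<and> nd (Suc n) (g \<otimes> h)"
      unfolding nd_Suc by simp
  qed
qed

lemma Hc_mult: "g \<in> Hc \<Longrightarrow> h \<in> Hc \<Longrightarrow> g \<otimes> h \<in> Hc"
  using Hc_mult_aux unfolding Hc_def by blast

lemma Hc_inv_aux: "\<forall>g. g \<in> Hc \<longrightarrow> pd n (inv g) \<and> nd n (inv g)"
proof (induction n)
  case 0 then show ?case by simp
next
  case (Suc n)
  show ?case
  proof (intro allI impI)
    fix g assume g: "g \<in> Hc"
    have "pd n (inv (phi g)) \<and> nd n (inv (psi g))"
      using Suc g Hc_phi Hc_psi by blast
    moreover have "inv g \<in> A" "inv g \<in> B" "phi (inv g) = inv (phi g)" "psi (inv g) = inv (psi g)"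
      using g Hc_A Hc_B iA iB phi_inv psi_inv by auto
    ultimately show "pd (Suc n) (inv g) \<and> nd (Suc n) (inv g)"
      unfolding nd_Suc by simp
  qed
qed

lemma Hc_inv: "g \<in> Hc \<Longrightarrow> inv g \<in> Hc"
  using Hc_inv_aux unfolding Hc_def by blast

lemma Hc_subgroup: "subgroup Hc G"
  by (rule subgroupI) (use Hc_sub_A A_carr Hc_one Hc_mult Hc_inv in auto)

lemma seq_char: "hnn_core_seq A B phi k = {g. pd (Suc k) g \<and> nd (Suc k) g}"
proof (induction k)
  case 0 then show ?case by (auto simp: nd_Suc)
next
  case (Suc k)
  let ?S = "hnn_core_seq A B phi k"
  show ?case
  proof (rule equalityI; rule subsetI)
    fix g assume "g \<in> hnn_core_seq A B phi (Suc k)"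
    then have g: "g \<in> A" "phi g \<in> ?S" "g \<in> ?S" "g \<in> phi ` ?S" by auto
    then obtain h where h: "h \<in> ?S" "g = phi h" by blast
    have hA: "h \<in> A" using h Suc by simp
    show "g \<in> {g. pd (Suc (Suc k)) g \<and> nd (Suc (Suc k)) g}"
      using g h hA Suc phiB psi_phi nd_Suc[where n="Suc k" and g=g] by auto
  next
    fix g assume g: "g \<in> {g. pd (Suc (Suc k)) g \<and> nd (Suc (Suc k)) g}"
    then have P: "pd (Suc (Suc k)) g" and N: "nd (Suc (Suc k)) g" by auto
    have gA: "g \<in> A" using P by simp
    have gB: "g \<in> B" using N by simp
    have pd1: "pd (Suc k) (phi g)" using P by simp
    have nd0: "nd k g" by (rule nd_mono[OF nd_mono[OF N]])
    have nd1: "nd (Suc k) (phi g)" by (simp add: phiB gA psi_phi nd0)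
    have 1: "phi g \<in> ?S" using Suc.IH pd1 nd1 by simp
    have 2: "g \<in> ?S" using Suc.IH pd_mono[OF P] nd_mono[OF N] by simp
    have pd0: "pd k g" by (rule pd_mono[OF pd_mono[OF P]])
    have "pd (Suc k) (psi g)" by (simp add: psiA gB phi_psi pd0)
    moreover have "nd (Suc k) (psi g)" using N by simp
    ultimately have 3: "psi g \<in> ?S" using Suc.IH by simp
    have "g \<in> phi ` ?S" using 3 phi_psi[OF gB] by (metis image_eqI)
    with 1 2 gA show "g \<in> hnn_core_seq A B phi (Suc k)" by simp
  qed
qed

lemma core_eq: "hnn_core A B phi = Hc"
proof -
  have "hnn_core A B phi = {g. \<forall>k. pd (Suc k) g \<and> nd (Suc k) g}"
    unfolding hnn_core_def seq_char by blast
  also have "\<dots> = Hc" unfolding Hc_def by (metis not0_implies_Suc phi_neg_defined.simps(1) phi_pos_defined.simps(1))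
  finally show ?thesis .
qed

lemma Hc_carr: "Hc \<subseteq> carrier G" using Hc_sub_A A_carr by blast

lemma part3: "Hc = {g \<in> carrier G. \<forall>j::int. phi_defined A B phi j g}"
proof -
  have "(\<forall>j::int. phi_defined A B phi j g) \<longleftrightarrow> (\<forall>n. pd n g \<and> nd n g)" for g
  proof
    assume h: "\<forall>j::int. phi_defined A B phi j g"
    show "\<forall>n. pd n g \<and> nd n g"
    proof
      fix n
      have "pd n g" using h[rule_format, of "int n"] by (simp add: phi_defined_def)
      moreover have "nd n g"
      proof (cases n)
        case 0 then show ?thesis by simp
      next
        case (Suc m)
        have "phi_defined A B phi (- int n) g" using h by blast
        moreover have "\<not> 0 \<le> - int n" using Suc by simp
        ultimately show ?thesis unfolding phi_defined_def by (simp del: nd_Suc)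
      qed
      ultimately show "pd n g \<and> nd n g" by blast
    qed
  next
    assume "\<forall>n. pd n g \<and> nd n g"
    then show "\<forall>j::int. phi_defined A B phi j g" by (simp add: phi_defined_def)
  qed
  then have "Hc = {g. \<forall>j::int. phi_defined A B phi j g}" unfolding Hc_def by blast
  then show ?thesis using Hc_carr by blast
qed

end



context hnn_loc
begin

lemma pd_iter: "pd n g \<Longrightarrow> m < n \<Longrightarrow> (phi ^^ m) g \<in> A"
proof -
  assume "pd n g" "m < n"
  then have "pd (Suc m) g" using pd_mono' by (metis Suc_leI)
  then show ?thesis using pd_Suc_right[of A phi m g] by blast
qed

lemma iter_cancel: "\<forall>x y. (phi ^^ i) x = (phi ^^ i) y \<longrightarrow> (\<forall>m<i. (phi ^^ m) x \<in> A \<and> (phi ^^ m) y \<in> A) \<longrightarrow> x = y"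
proof (induction i)
  case 0 then show ?case by simp
next
  case (Suc i)
  show ?case
  proof (intro allI impI)
    fix x y assume e: "(phi ^^ Suc i) x = (phi ^^ Suc i) y"
      and m: "\<forall>m<Suc i. (phi ^^ m) x \<in> A \<and> (phi ^^ m) y \<in> A"
    have e': "(phi ^^ i) (phi x) = (phi ^^ i) (phi y)" using e by (simp only: funpow_Suc_right comp_apply)
    have "\<forall>m<i. (phi ^^ m) (phi x) \<in> A \<and> (phi ^^ m) (phi y) \<in> A"
    proof (intro allI impI)
      fix m assume "m < i"
      then have "(phi ^^ Suc m) x \<in> A \<and> (phi ^^ Suc m) y \<in> A" using m by blast
      then show "(phi ^^ m) (phi x) \<in> A \<and> (phi ^^ m) (phi y) \<in> A" by (simp only: funpow_Suc_right comp_apply)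
    qed
    then have "phi x = phi y" using Suc.IH e' by blast
    moreover have "x \<in> A" "y \<in> A" using m[rule_format, of 0] by auto
    ultimately show "x = y" using phi_inj by blast
  qed
qed

lemma fix_pow: "(f ^^ d) g = g \<Longrightarrow> ((f ^^ d) ^^ q) g = g"
  by (induction q) auto

lemma finite_key:
  assumes fin: "finite A" and P: "pd (Suc (card A)) g"
  shows "g \<in> Hc"
proof -
  let ?N = "card A"
  let ?f = "\<lambda>m. (phi ^^ m) g"
  have inA: "\<And>m. m \<le> ?N \<Longrightarrow> ?f m \<in> A" using pd_iter[OF P] by (simp add: less_Suc_eq_le)
  have "\<not> inj_on ?f {..?N}"
  proof
    assume "inj_on ?f {..?N}"
    moreover have "?f ` {..?N} \<subseteq> A" using inA by auto
    ultimately have "card {..?N} \<le> ?N" using card_inj_on_le fin by blast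
    then show False by simp
  qed
  then obtain i j where ij: "i \<le> ?N" "j \<le> ?N" "i \<noteq> j" "?f i = ?f j"
    unfolding inj_on_def by auto
  obtain i j where ij: "i < j" "j \<le> ?N" "?f i = ?f j"
  proof (cases "i < j")
    case True then show ?thesis using ij that by blast
  next
    case False then have "j < i" using ij by simp
    then show ?thesis using ij that by metis
  qed
  define d where "d = j - i"
  have d: "d \<ge> 1" "j = i + d" using ij unfolding d_def by auto
  have "(phi ^^ i) g = (phi ^^ i) ((phi ^^ d) g)"
    using ij(3) d(2) by (simp add: funpow_add)
  moreover have "\<forall>m<i. (phi ^^ m) g \<in> A \<and> (phi ^^ m) ((phi ^^ d) g) \<in> A"
  proof (intro allI impI conjI)
    fix m assume "m < i"
    then show "(phi ^^ m) g \<in> A" using inA ij by simp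
    have "(phi ^^ m) ((phi ^^ d) g) = ?f (m + d)" by (simp add: funpow_add)
    then show "(phi ^^ m) ((phi ^^ d) g) \<in> A" using inA ij d \<open>m < i\<close> by simp
  qed
  ultimately have per: "(phi ^^ d) g = g" using iter_cancel by metis
  have permod: "?f m = ?f (m mod d)" for m
  proof -
    have "?f m = ?f (m mod d + d * (m div d))" by simp
    also have "\<dots> = (phi ^^ (m mod d)) (((phi ^^ d) ^^ (m div d)) g)"
      by (simp only: funpow_add comp_apply funpow_mult)
    also have "\<dots> = ?f (m mod d)" using fix_pow[OF per] by simp
    finally show ?thesis .
  qed
  let ?O = "range ?f"
  have OA: "?O \<subseteq> A"
  proof
    fix x assume "x \<in> ?O"
    then obtain m where "x = ?f m" by blast
    moreover have "m mod d < d" using d by simp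
    moreover have "m mod d \<le> card A" using \<open>m mod d < d\<close> d ij by linarith
    ultimately show "x \<in> A" using permod[of m] inA by metis
  qed
  have "phi ` ?O = ?O"
  proof
    show "phi ` ?O \<subseteq> ?O"
    proof
      fix x assume "x \<in> phi ` ?O"
      then obtain m where "x = phi (?f m)" by blast
      then have "x = ?f (Suc m)" by simp
      then show "x \<in> ?O" by blast
    qed
    show "?O \<subseteq> phi ` ?O"
    proof
      fix x assume "x \<in> ?O"
      then obtain m where x: "x = ?f m" by blast
      have "?f (m + d) = (phi ^^ m) ((phi ^^ d) g)" by (simp add: funpow_add)
      then have "x = ?f (m + d)" using per x by simp
      also have "\<dots> = phi (?f (m + d - 1))" using d
        by (metis Suc_diff_1 add_gr_0 funpow.simps(2) comp_apply less_le_trans zero_less_one)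
      finally show "x \<in> phi ` ?O" by blast
    qed
  qed
  then have "?O \<subseteq> Hc" using Hc_max OA by blast
  moreover have "g \<in> ?O" by (metis (no_types, lifting) funpow_0 rangeI)
  ultimately show ?thesis by blast
qed

lemma part4:
  assumes fin: "finite A"
  shows "\<exists>r::nat. \<forall>s\<ge>r. Hc = {g \<in> carrier G. \<forall>j::nat. j \<le> s \<longrightarrow> phi_defined A B phi (int j) g}"
proof (intro exI allI impI)
  fix s assume s: "Suc (card A) \<le> s"
  show "Hc = {g \<in> carrier G. \<forall>j::nat. j \<le> s \<longrightarrow> phi_defined A B phi (int j) g}"
  proof (rule equalityI; rule subsetI)
    fix g assume g: "g \<in> Hc"
    then show "g \<in> {g \<in> carrier G. \<forall>j::nat. j \<le> s \<longrightarrow> phi_defined A B phi (int j) g}"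
      using Hc_carr HcD[OF g] by (auto simp: phi_defined_def)
  next
    fix g assume "g \<in> {g \<in> carrier G. \<forall>j::nat. j \<le> s \<longrightarrow> phi_defined A B phi (int j) g}"
    then have "pd s g" by (simp add: phi_defined_def)
    then have "pd (Suc (card A)) g" by (rule pd_mono'[OF _ s])
    then show "g \<in> Hc" by (rule finite_key[OF fin])
  qed
qed

end



context hnn_loc
begin

definition crep :: "'g set \<Rightarrow> 'g \<Rightarrow> 'g" where
  "crep H g = (if H #> g = H then \<one> else (SOME r. r \<in> H #> g))"

lemma crep_in:
  assumes H: "subgroup H G" and g: "g \<in> carrier G"
  shows "\<exists>h\<in>H. crep H g = h \<otimes> g"
proof (cases "H #> g = H")
  case True
  have "g \<in> H" using rcos_self[OF g H] True by simp
  then have "inv g \<in> H" by (rule subgroup.m_inv_closed[OF H])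
  moreover have "crep H g = inv g \<otimes> g" using True g by (simp add: crep_def)
  ultimately show ?thesis by blast
next
  case False
  have "g \<in> H #> g" by (rule rcos_self[OF g H])
  then have "(SOME r. r \<in> H #> g) \<in> H #> g" by (rule someI)
  then have "crep H g \<in> H #> g" using False by (simp add: crep_def)
  then show ?thesis unfolding r_coset_def by blast
qed

lemma sub_carr: "subgroup H G \<Longrightarrow> h \<in> H \<Longrightarrow> h \<in> carrier G"
  using subgroup.subset by blast

lemma crep_carr:
  assumes H: "subgroup H G" and g: "g \<in> carrier G"
  shows "crep H g \<in> carrier G"
  using crep_in[OF H g] sub_carr[OF H] g by auto

lemma crep_mult:
  assumes H: "subgroup H G" and h: "h \<in> H" and g: "g \<in> carrier G"
  shows "crep H (h \<otimes> g) = crep H g"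
proof -
  have hc: "h \<in> carrier G" by (rule sub_carr[OF H h])
  have "H #> (h \<otimes> g) = (H #> h) #> g"
    using coset_mult_assoc[OF subgroup.subset[OF H] hc g] by simp
  also have "H #> h = H" by (rule subgroup.rcos_const[OF H is_group h])
  finally have "H #> (h \<otimes> g) = H #> g" .
  then show ?thesis by (simp add: crep_def)
qed

lemma crep_one_iff:
  assumes H: "subgroup H G" and g: "g \<in> carrier G"
  shows "crep H g = \<one> \<longleftrightarrow> g \<in> H"
proof
  assume "g \<in> H"
  then have "H #> g = H" by (rule subgroup.rcos_const[OF H is_group])
  then show "crep H g = \<one>" by (simp add: crep_def)
next
  assume c: "crep H g = \<one>"
  obtain h where h: "h \<in> H" "crep H g = h \<otimes> g" using crep_in[OF H g] by blast
  have hc: "h \<in> carrier G" by (rule sub_carr[OF H h(1)])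
  have "\<one> = h \<otimes> g" using c h by simp
  then have "g = inv h \<otimes> \<one>" using inv_solve_left[OF g hc one_closed] by simp
  then have "g = inv h" using hc by simp
  then show "g \<in> H" using subgroup.m_inv_closed[OF H h(1)] by simp
qed

lemma crep_idem:
  assumes H: "subgroup H G" and g: "g \<in> carrier G"
  shows "crep H (crep H g) = crep H g"
proof -
  obtain h where h: "h \<in> H" "crep H g = h \<otimes> g" using crep_in[OF H g] by blast
  show ?thesis using h crep_mult[OF H h(1) g] by simp
qed

lemma crep_part:
  assumes H: "subgroup H G" and g: "g \<in> carrier G"
  shows "g \<otimes> inv (crep H g) \<in> H"
proof -
  obtain h where h: "h \<in> H" "crep H g = h \<otimes> g" using crep_in[OF H g] by blast
  have hc: "h \<in> carrier G" by (rule sub_carr[OF H h(1)])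
  have "g \<otimes> inv (crep H g) = g \<otimes> (inv g \<otimes> inv h)" using h hc g by (simp add: inv_mult_group)
  also have "\<dots> = inv h" using hc g by (simp add: m_assoc[symmetric])
  finally show ?thesis using subgroup.m_inv_closed[OF H h(1)] by simp
qed

lemma crep_decomp:
  assumes H: "subgroup H G" and g: "g \<in> carrier G"
  shows "(g \<otimes> inv (crep H g)) \<otimes> crep H g = g"
  using crep_carr[OF H g] g by (simp add: m_assoc)

definition grp :: "bool \<Rightarrow> 'g set" where "grp e = (if e then B else A)"
definition fn :: "bool \<Rightarrow> 'g \<Rightarrow> 'g" where "fn e = (if e then psi else phi)"

lemma grp_sub: "subgroup (grp e) G"
  by (simp add: grp_def subA subB)

lemma fn_in: "h \<in> grp e \<Longrightarrow> fn e h \<in> grp (\<not> e)"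
  by (cases e) (simp_all add: grp_def fn_def phiB psiA)

lemma fn_fn: "h \<in> grp e \<Longrightarrow> fn (\<not> e) (fn e h) = h"
  by (cases e) (simp_all add: grp_def fn_def phi_psi psi_phi)

lemma fn_mult: "h \<in> grp e \<Longrightarrow> h' \<in> grp e \<Longrightarrow> fn e (h \<otimes> h') = fn e h \<otimes> fn e h'"
  by (cases e) (simp_all add: grp_def fn_def phi_mult psi_mult)

lemma grp_carr: "h \<in> grp e \<Longrightarrow> h \<in> carrier G"
  by (rule sub_carr[OF grp_sub])

fun red :: "(bool \<times> 'g) list \<Rightarrow> bool" where
  "red ((e, s) # (e', s') # xs) = ((s = \<one> \<longrightarrow> e' = e) \<and> red ((e', s') # xs))"
| "red _ = True"

definition valid :: "'g \<times> (bool \<times> 'g) list \<Rightarrow> bool" where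
  "valid x = (fst x \<in> carrier G \<and> (\<forall>(e, s)\<in>set (snd x). s \<in> carrier G \<and> crep (grp e) s = s)
     \<and> red (snd x))"

definition actG :: "'g \<Rightarrow> 'g \<times> (bool \<times> 'g) list \<Rightarrow> 'g \<times> (bool \<times> 'g) list" where
  "actG g x = (g \<otimes> fst x, snd x)"

definition stp :: "bool \<Rightarrow> 'g \<times> (bool \<times> 'g) list \<Rightarrow> 'g \<times> (bool \<times> 'g) list" where
  "stp e x = (let r = crep (grp e) (fst x); h = fst x \<otimes> inv r in
     if r = \<one> \<and> snd x \<noteq> [] \<and> fst (hd (snd x)) = (\<not> e)
     then (fn e h \<otimes> snd (hd (snd x)), tl (snd x))
     else (fn e h, (e, r) # snd x))"

lemma stp_eq: "stp e (g0, xs) = (if crep (grp e) g0 = \<one> \<and> xs \<noteq> [] \<and> fst (hd xs) = (\<not> e)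
     then (fn e (g0 \<otimes> inv (crep (grp e) g0)) \<otimes> snd (hd xs), tl xs)
     else (fn e (g0 \<otimes> inv (crep (grp e) g0)), (e, crep (grp e) g0) # xs))"
  by (simp add: stp_def Let_def)

lemma red_tl: "red (y # xs) \<Longrightarrow> red xs"
  by (cases xs) (auto, metis red.simps(1) surj_pair)

lemma actG_valid: "g \<in> carrier G \<Longrightarrow> valid x \<Longrightarrow> valid (actG g x)"
  by (simp add: valid_def actG_def)

lemma stp_valid:
  assumes v: "valid x" shows "valid (stp e x)"
proof -
  obtain g0 xs where x: "x = (g0, xs)" by (cases x)
  have g0: "g0 \<in> carrier G" using v x by (simp add: valid_def)
  have xs: "\<forall>(e, s)\<in>set xs. s \<in> carrier G \<and> crep (grp e) s = s" "red xs" using v x by (simp_all add: valid_def)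
  define r where "r = crep (grp e) g0"
  define h where "h = g0 \<otimes> inv r"
  have sx: "stp e x = (if r = \<one> \<and> xs \<noteq> [] \<and> fst (hd xs) = (\<not> e) then (fn e h \<otimes> snd (hd xs), tl xs) else (fn e h, (e, r) # xs))"
    unfolding x stp_eq r_def[symmetric] h_def[symmetric] by (rule refl)
  have rc: "r \<in> carrier G" unfolding r_def by (rule crep_carr[OF grp_sub g0])
  have hH: "h \<in> grp e" unfolding h_def r_def by (rule crep_part[OF grp_sub g0])
  have fh: "fn e h \<in> carrier G" using fn_in[OF hH] grp_carr by blast
  show ?thesis
  proof (cases "r = \<one> \<and> xs \<noteq> [] \<and> fst (hd xs) = (\<not> e)")
    case True
    then obtain e' s xs' where xs': "xs = (e', s) # xs'" by (cases xs) auto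
    have s: "s \<in> carrier G" using xs xs' by auto
    have "stp e x = (fn e h \<otimes> s, xs')" unfolding sx if_P[OF True] using xs' by simp
    moreover have "red xs'" using xs(2) xs' red_tl by blast
    ultimately show ?thesis using xs xs' fh s by (simp add: valid_def)
  next
    case False
    have st: "stp e x = (fn e h, (e, r) # xs)" unfolding sx if_not_P[OF False] by (rule refl)
    have cr: "crep (grp e) r = r" unfolding r_def by (rule crep_idem[OF grp_sub g0])
    have "red ((e, r) # xs)"
    proof (cases xs)
      case Nil then show ?thesis by simp
    next
      case (Cons y ys)
      obtain e' s' where y: "y = (e', s')" by (cases y)
      have "r = \<one> \<longrightarrow> e' = e" using False Cons y by auto
      then show ?thesis using xs(2) Cons y by simp
    qed
    then show ?thesis using st xs fh rc cr by (simp add: valid_def)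
  qed
qed

lemma stp_inv:
  assumes v: "valid x" shows "stp (\<not> e) (stp e x) = x"
proof -
  obtain g0 xs where x: "x = (g0, xs)" by (cases x)
  have g0: "g0 \<in> carrier G" using v x by (simp add: valid_def)
  have xs: "\<forall>(e, s)\<in>set xs. s \<in> carrier G \<and> crep (grp e) s = s" "red xs" using v x by (simp_all add: valid_def)
  define r where "r = crep (grp e) g0"
  define h where "h = g0 \<otimes> inv r"
  have sx: "stp e x = (if r = \<one> \<and> xs \<noteq> [] \<and> fst (hd xs) = (\<not> e) then (fn e h \<otimes> snd (hd xs), tl xs) else (fn e h, (e, r) # xs))"
    unfolding x stp_eq r_def[symmetric] h_def[symmetric] by (rule refl)
  have rc: "r \<in> carrier G" unfolding r_def by (rule crep_carr[OF grp_sub g0])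
  have hH: "h \<in> grp e" unfolding h_def r_def by (rule crep_part[OF grp_sub g0])
  have fhH: "fn e h \<in> grp (\<not> e)" by (rule fn_in[OF hH])
  have fh: "fn e h \<in> carrier G" using fhH grp_carr by blast
  have ffh: "fn (\<not> e) (fn e h) = h" by (rule fn_fn[OF hH])
  show ?thesis
  proof (cases "r = \<one> \<and> xs \<noteq> [] \<and> fst (hd xs) = (\<not> e)")
    case True
    then obtain s xs' where xs': "xs = (\<not> e, s) # xs'" by (cases xs) auto
    have s: "s \<in> carrier G" and cs: "crep (grp (\<not> e)) s = s" using xs xs' by auto
    have h0: "h = g0" using True rc g0 unfolding h_def by simp
    have st: "stp e x = (fn e h \<otimes> s, xs')" unfolding sx if_P[OF True] using xs' by simp
    have r2: "crep (grp (\<not> e)) (fn e h \<otimes> s) = s" using crep_mult[OF grp_sub fhH s] cs by simp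
    have h2: "(fn e h \<otimes> s) \<otimes> inv s = fn e h" using fh s by (simp add: m_assoc)
    have nc: "\<not> (s = \<one> \<and> xs' \<noteq> [] \<and> fst (hd xs') = (\<not> \<not> e))"
    proof
      assume a: "s = \<one> \<and> xs' \<noteq> [] \<and> fst (hd xs') = (\<not> \<not> e)"
      then obtain s' ys where "xs' = (e, s') # ys" by (cases xs') auto
      then show False using xs(2) xs' a by simp
    qed
    have "stp (\<not> e) (stp e x) = (fn (\<not> e) (fn e h), (\<not> e, s) # xs')"
      unfolding st stp_eq r2 h2 if_not_P[OF nc] by (rule refl)
    then show ?thesis using ffh h0 x xs' by simp
  next
    case False
    have st: "stp e x = (fn e h, (e, r) # xs)" unfolding sx if_not_P[OF False] by (rule refl)
    have r2: "crep (grp (\<not> e)) (fn e h) = \<one>" using crep_one_iff[OF grp_sub fh] fhH by simp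
    have "stp (\<not> e) (stp e x) = (fn (\<not> e) (fn e h \<otimes> inv \<one>) \<otimes> r, xs)"
      unfolding st stp_eq r2 by simp
    also have "\<dots> = (h \<otimes> r, xs)" using fh ffh by simp
    also have "h \<otimes> r = g0" unfolding h_def r_def by (rule crep_decomp[OF grp_sub g0])
    finally show ?thesis using x by simp
  qed
qed

lemma stp_comm:
  assumes v: "valid x" and c: "c \<in> grp e"
  shows "stp e (actG c x) = actG (fn e c) (stp e x)"
proof -
  obtain g0 xs where x: "x = (g0, xs)" by (cases x)
  have g0: "g0 \<in> carrier G" using v x by (simp add: valid_def)
  have cc: "c \<in> carrier G" by (rule grp_carr[OF c])
  define r where "r = crep (grp e) g0"
  define h where "h = g0 \<otimes> inv r"
  have sx: "stp e x = (if r = \<one> \<and> xs \<noteq> [] \<and> fst (hd xs) = (\<not> e) then (fn e h \<otimes> snd (hd xs), tl xs) else (fn e h, (e, r) # xs))"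
    unfolding x stp_eq r_def[symmetric] h_def[symmetric] by (rule refl)
  have rc: "r \<in> carrier G" unfolding r_def by (rule crep_carr[OF grp_sub g0])
  have hH: "h \<in> grp e" unfolding h_def r_def by (rule crep_part[OF grp_sub g0])
  have r2: "crep (grp e) (c \<otimes> g0) = r" unfolding r_def by (rule crep_mult[OF grp_sub c g0])
  have h2: "(c \<otimes> g0) \<otimes> inv r = c \<otimes> h" unfolding h_def using cc g0 rc by (simp add: m_assoc)
  have f2: "fn e (c \<otimes> h) = fn e c \<otimes> fn e h" by (rule fn_mult[OF c hH])
  have fc: "fn e c \<in> carrier G" using fn_in[OF c] grp_carr by blast
  have fh: "fn e h \<in> carrier G" using fn_in[OF hH] grp_carr by blast
  have ax: "actG c x = (c \<otimes> g0, xs)" using x by (simp add: actG_def)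
  show ?thesis
  proof (cases "r = \<one> \<and> xs \<noteq> [] \<and> fst (hd xs) = (\<not> e)")
    case True
    have xs_carr: "snd (hd xs) \<in> carrier G" using v x True by (cases xs) (auto simp: valid_def)
    have "stp e (actG c x) = (fn e c \<otimes> fn e h \<otimes> snd (hd xs), tl xs)"
      using True unfolding ax stp_eq r2 h2 f2 by simp
    moreover have "stp e x = (fn e h \<otimes> snd (hd xs), tl xs)"
      unfolding sx if_P[OF True] by (rule refl)
    ultimately show ?thesis using fc fh xs_carr by (simp add: actG_def m_assoc)
  next
    case False
    have "stp e (actG c x) = (fn e c \<otimes> fn e h, (e, r) # xs)"
      unfolding ax stp_eq r2 h2 f2 if_not_P[OF False] by (rule refl)
    moreover have "stp e x = (fn e h, (e, r) # xs)"
      unfolding sx if_not_P[OF False] by (rule refl)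
    ultimately show ?thesis by (simp add: actG_def)
  qed
qed

end



context hnn_loc
begin

fun ev :: "'g hnn_letter \<Rightarrow> 'g \<times> (bool \<times> 'g) list \<Rightarrow> 'g \<times> (bool \<times> 'g) list" where
  "ev (Gen g) = actG g"
| "ev T = stp True"
| "ev Tinv = stp False"

fun evw :: "'g hnn_letter list \<Rightarrow> 'g \<times> (bool \<times> 'g) list \<Rightarrow> 'g \<times> (bool \<times> 'g) list" where
  "evw [] x = x"
| "evw (l # w) x = ev l (evw w x)"

lemma evw_append: "evw (u @ v) x = evw u (evw v x)"
  by (induction u) auto

lemma words_Cons: "l # w \<in> hnn_words G \<longleftrightarrow> (\<forall>g. l = Gen g \<longrightarrow> g \<in> carrier G) \<and> w \<in> hnn_words G"
  unfolding hnn_words_def by auto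

lemma words_append: "u @ v \<in> hnn_words G \<longleftrightarrow> u \<in> hnn_words G \<and> v \<in> hnn_words G"
  unfolding hnn_words_def by auto

lemma words_Nil: "[] \<in> hnn_words G"
  unfolding hnn_words_def by auto

lemma ev_valid: "(\<forall>g. l = Gen g \<longrightarrow> g \<in> carrier G) \<Longrightarrow> valid x \<Longrightarrow> valid (ev l x)"
  by (cases l) (auto intro: actG_valid stp_valid)

lemma evw_valid: "w \<in> hnn_words G \<Longrightarrow> valid x \<Longrightarrow> valid (evw w x)"
  by (induction w) (auto simp: words_Cons intro: ev_valid)

lemma stp_inv_TF: "valid x \<Longrightarrow> stp True (stp False x) = x"
  using stp_inv[of x False] by simp
lemma stp_inv_FT: "valid x \<Longrightarrow> stp False (stp True x) = x"
  using stp_inv[of x True] by simp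

lemma inv_main:
  "hnn_eq G A phi u v \<Longrightarrow> u \<in> hnn_words G \<and> v \<in> hnn_words G \<and> (\<forall>x. valid x \<longrightarrow> evw u x = evw v x)"
proof (induction rule: hnn_eq.induct)
  case (hnn_refl w) then show ?case by simp
next
  case (hnn_sym u v) then show ?case by simp
next
  case (hnn_trans u v w) then show ?case by simp
next
  case (hnn_ctxt u v p q)
  have "evw (p @ u @ q) x = evw (p @ v @ q) x" if v: "valid x" for x
  proof -
    have "valid (evw q x)" by (rule evw_valid[OF hnn_ctxt.hyps(3) v])
    then have "evw u (evw q x) = evw v (evw q x)" using hnn_ctxt.IH by blast
    then show ?thesis by (simp add: evw_append)
  qed
  then show ?case using hnn_ctxt by (simp add: words_append)
next
  case (hnn_mult g h)
  then show ?case by (auto simp: words_Cons words_Nil actG_def valid_def m_assoc)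
next
  case hnn_one
  then show ?case by (auto simp: words_Cons words_Nil actG_def valid_def)
next
  case hnn_t_tinv
  then show ?case by (auto simp: words_Cons words_Nil stp_inv_TF)
next
  case hnn_tinv_t
  then show ?case by (auto simp: words_Cons words_Nil stp_inv_FT)
next
  case (hnn_rel a)
  have aA: "a \<in> A" by fact
  have ac: "a \<in> carrier G" using aA A_carr by blast
  have pc: "phi a \<in> carrier G" using phiB[OF aA] B_carr by blast
  have "evw [Tinv, Gen a, T] x = evw [Gen (phi a)] x" if v: "valid x" for x
  proof -
    have pB: "phi a \<in> grp True" using phiB[OF aA] by (simp add: grp_def)
    have "stp True (actG (phi a) x) = actG a (stp True x)"
      using stp_comm[OF v pB] psi_phi[OF aA] by (simp add: fn_def)
    then have "evw [Tinv, Gen a, T] x = stp False (stp True (actG (phi a) x))" by simp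
    also have "\<dots> = actG (phi a) x" by (rule stp_inv_FT[OF actG_valid[OF pc v]])
    finally show ?thesis by simp
  qed
  then show ?case using ac pc by (auto simp: words_Cons words_Nil)
qed

abbreviation "HG \<equiv> HNN G A phi"
abbreviation "cls \<equiv> hnn_class G A phi"
abbreviation "E \<equiv> hnn_eq G A phi"
abbreviation "W \<equiv> hnn_words G"

lemma cls_self: "u \<in> W \<Longrightarrow> u \<in> cls u"
  by (simp add: hnn_class_def hnn_refl)

lemma cls_eq: assumes "u \<in> W" "v \<in> W" shows "cls u = cls v \<longleftrightarrow> E u v"
proof
  assume "cls u = cls v"
  then have "v \<in> cls u" using cls_self[OF assms(2)] by simp
  then show "E u v" by (simp add: hnn_class_def)
next
  assume e: "E u v"
  show "cls u = cls v"
    unfolding hnn_class_def using e hnn_trans hnn_sym by blast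
qed

lemma cls_mult: assumes u: "u \<in> W" and v: "v \<in> W"
  shows "cls u \<otimes>\<^bsub>HG\<^esub> cls v = cls (u @ v)"
proof -
  define u' where "u' = (SOME u'. u' \<in> cls u)"
  define v' where "v' = (SOME v'. v' \<in> cls v)"
  have "u' \<in> cls u" unfolding u'_def by (rule someI, rule cls_self[OF u])
  then have eu: "E u u'" by (simp add: hnn_class_def)
  have "v' \<in> cls v" unfolding v'_def by (rule someI, rule cls_self[OF v])
  then have ev: "E v v'" by (simp add: hnn_class_def)
  have u'W: "u' \<in> W" using inv_main[OF eu] by blast
  have e1: "E ([] @ u @ v) ([] @ u' @ v)" by (rule hnn_ctxt[OF eu words_Nil v])
  have e2: "E (u' @ v @ []) (u' @ v' @ [])" by (rule hnn_ctxt[OF ev u'W words_Nil])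
  have "E (u @ v) (u' @ v')" using hnn_trans[OF e1[simplified] e2[simplified]] .
  then have "cls (u' @ v') = cls (u @ v)"
    using cls_eq inv_main by metis
  then show ?thesis by (simp add: HNN_def hnn_mult_def u'_def v'_def)
qed

lemma HG_carrier: "carrier HG = cls ` W" by (simp add: HNN_def)
lemma HG_one: "\<one>\<^bsub>HG\<^esub> = cls []" by (simp add: HNN_def)

fun invl :: "'g hnn_letter \<Rightarrow> 'g hnn_letter" where
  "invl (Gen g) = Gen (inv g)"
| "invl T = Tinv"
| "invl Tinv = T"

definition invw :: "'g hnn_letter list \<Rightarrow> 'g hnn_letter list" where
  "invw w = rev (map invl w)"

lemma invw_W: "w \<in> W \<Longrightarrow> invw w \<in> W"
proof -
  assume w: "w \<in> W"
  have "\<forall>x\<in>set (invw w). \<forall>g. x = Gen g \<longrightarrow> g \<in> carrier G"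
  proof (intro ballI allI impI)
    fix x g assume x: "x \<in> set (invw w)" and g: "x = Gen g"
    then obtain l where l: "l \<in> set w" "x = invl l" unfolding invw_def by auto
    have lc: "\<forall>g. l = Gen g \<longrightarrow> g \<in> carrier G" using w l(1) by (auto simp: hnn_words_def)
    show "g \<in> carrier G"
    proof (cases l)
      case (Gen g') then show ?thesis using lc l(2) g by auto
    next
      case T then show ?thesis using l(2) g by simp
    next
      case Tinv then show ?thesis using l(2) g by simp
    qed
  qed
  then show ?thesis by (simp add: hnn_words_def)
qed

lemma invw_E: "w \<in> W \<Longrightarrow> E (invw w @ w) []"
proof (induction w)
  case Nil then show ?case by (simp add: invw_def hnn_refl words_Nil)
next
  case (Cons l w)
  have lw: "(\<forall>g. l = Gen g \<longrightarrow> g \<in> carrier G)" and w: "w \<in> W" using Cons.prems words_Cons by auto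
  have el: "E [invl l, l] []"
  proof (cases l)
    case (Gen g)
    then have g: "g \<in> carrier G" using lw by simp
    have "E [Gen (inv g), Gen g] [Gen (inv g \<otimes> g)]" by (rule hnn_mult) (use g in simp_all)
    then have "E [Gen (inv g), Gen g] [Gen \<one>]" using g by simp
    then have "E [Gen (inv g), Gen g] []" using hnn_one[of G A phi] by (rule hnn_trans)
    then show ?thesis using Gen by simp
  next
    case T then show ?thesis by (simp add: hnn_tinv_t)
  next
    case Tinv then show ?thesis by (simp add: hnn_t_tinv)
  qed
  have "E (invw w @ [invl l, l] @ w) (invw w @ [] @ w)"
    by (rule hnn_ctxt[OF el invw_W[OF w] w])
  moreover have "invw (l # w) @ (l # w) = invw w @ [invl l, l] @ w" by (simp add: invw_def)
  ultimately show ?case using Cons.IH[OF w] hnn_trans by simp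
qed

lemma HG_group: "group HG"
proof (rule groupI)
  fix x y assume "x \<in> carrier HG" "y \<in> carrier HG"
  then obtain u v where "u \<in> W" "v \<in> W" "x = cls u" "y = cls v" by (auto simp: HG_carrier)
  then show "x \<otimes>\<^bsub>HG\<^esub> y \<in> carrier HG" by (simp add: cls_mult HG_carrier words_append)
next
  show "\<one>\<^bsub>HG\<^esub> \<in> carrier HG" by (simp add: HG_carrier HG_one words_Nil)
next
  fix x y z assume "x \<in> carrier HG" "y \<in> carrier HG" "z \<in> carrier HG"
  then obtain u v w where "u \<in> W" "v \<in> W" "w \<in> W" "x = cls u" "y = cls v" "z = cls w" by (auto simp: HG_carrier)
  then show "x \<otimes>\<^bsub>HG\<^esub> y \<otimes>\<^bsub>HG\<^esub> z = x \<otimes>\<^bsub>HG\<^esub> (y \<otimes>\<^bsub>HG\<^esub> z)"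
    by (simp add: cls_mult words_append)
next
  fix x assume "x \<in> carrier HG"
  then obtain u where "u \<in> W" "x = cls u" by (auto simp: HG_carrier)
  then show "\<one>\<^bsub>HG\<^esub> \<otimes>\<^bsub>HG\<^esub> x = x" by (simp add: HG_one cls_mult words_Nil)
next
  fix x assume "x \<in> carrier HG"
  then obtain u where u: "u \<in> W" "x = cls u" by (auto simp: HG_carrier)
  have "cls (invw u) \<otimes>\<^bsub>HG\<^esub> x = cls []"
    using u invw_W invw_E cls_mult cls_eq words_append words_Nil by metis
  moreover have "cls (invw u) \<in> carrier HG" using invw_W[OF u(1)] by (simp add: HG_carrier)
  ultimately show "\<exists>y\<in>carrier HG. y \<otimes>\<^bsub>HG\<^esub> x = \<one>\<^bsub>HG\<^esub>" by (auto simp: HG_one)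
qed

end



context hnn_loc
begin

abbreviation hm (infixl "\<cdot>" 70) where "x \<cdot> y \<equiv> x \<otimes>\<^bsub>HG\<^esub> y"
abbreviation "tt \<equiv> hnn_t G A phi"
abbreviation "ti \<equiv> cls [Tinv]"
abbreviation "emb \<equiv> hnn_emb G A phi"

lemma W1: "[T] \<in> W" "[Tinv] \<in> W" by (simp_all add: hnn_words_def)
lemma WG: "g \<in> carrier G \<Longrightarrow> [Gen g] \<in> W" by (simp add: hnn_words_def)

lemma tt_carr: "tt \<in> carrier HG" using W1 by (simp add: hnn_t_def HG_carrier)
lemma ti_carr: "ti \<in> carrier HG" using W1 by (simp add: HG_carrier)
lemma emb_carr: "g \<in> carrier G \<Longrightarrow> emb g \<in> carrier HG"
  using WG by (simp add: hnn_emb_def HG_carrier)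

lemma tt_inv: "inv\<^bsub>HG\<^esub> tt = ti"
proof (rule group.inv_equality[OF HG_group])
  show "ti \<cdot> tt = \<one>\<^bsub>HG\<^esub>"
    using W1 cls_mult[of "[Tinv]" "[T]"] cls_eq[of "[Tinv, T]" "[]"] hnn_tinv_t words_Nil
    by (simp add: hnn_t_def HG_one hnn_words_def)
qed (simp_all add: tt_carr ti_carr)

lemma three: assumes "g \<in> carrier G"
  shows "ti \<cdot> emb g \<cdot> tt = cls [Tinv, Gen g, T]" "tt \<cdot> emb g \<cdot> ti = cls [T, Gen g, Tinv]"
  using assms W1 WG[OF assms] by (simp_all add: hnn_t_def hnn_emb_def cls_mult hnn_words_def)

lemma R1: assumes a: "a \<in> A" shows "ti \<cdot> emb a \<cdot> tt = emb (phi a)"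
proof -
  have ac: "a \<in> carrier G" using a A_carr by blast
  have pc: "phi a \<in> carrier G" using phiB[OF a] B_carr by blast
  have "cls [Tinv, Gen a, T] = cls [Gen (phi a)]"
    using cls_eq[of "[Tinv, Gen a, T]" "[Gen (phi a)]"] hnn_rel[OF a] ac pc
    by (simp add: hnn_words_def)
  then show ?thesis using three[OF ac] by (simp add: hnn_emb_def)
qed

lemma R2: assumes a: "a \<in> A" shows "tt \<cdot> emb (phi a) \<cdot> ti = emb a"
proof -
  interpret H: group HG by (rule HG_group)
  have ac: "a \<in> carrier G" using a A_carr by blast
  have "tt \<cdot> emb (phi a) \<cdot> ti = tt \<cdot> (ti \<cdot> emb a \<cdot> tt) \<cdot> ti" using R1[OF a] by simp
  also have "\<dots> = (tt \<cdot> ti) \<cdot> emb a \<cdot> (tt \<cdot> ti)"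
    using tt_carr ti_carr emb_carr[OF ac] by (simp add: H.m_assoc)
  also have "tt \<cdot> ti = \<one>\<^bsub>HG\<^esub>" using H.r_inv[OF tt_carr] tt_inv by simp
  finally show ?thesis using emb_carr[OF ac] by simp
qed

lemma x0_valid: "valid (\<one>, [])" by (simp add: valid_def)

lemma crepB1: "crep B \<one> = \<one>" using crep_one_iff[OF subB one_closed] one_B by simp
lemma crepA1: "crep A \<one> = \<one>" using crep_one_iff[OF subA one_closed] one_A by simp

lemma B1: assumes x: "x \<in> carrier G" and z: "z \<in> carrier G" and e: "ti \<cdot> emb x \<cdot> tt = emb z"
  shows "x \<in> A \<and> z = phi x"
proof -
  have "cls [Tinv, Gen x, T] = cls [Gen z]" using e three[OF x] by (simp add: hnn_emb_def)
  then have "E [Tinv, Gen x, T] [Gen z]" using cls_eq x z by (simp add: hnn_words_def)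
  then have ev: "evw [Tinv, Gen x, T] (\<one>, []) = evw [Gen z] (\<one>, [])" using inv_main x0_valid by blast
  have s1: "stp True (\<one>, []) = (\<one>, [(True, \<one>)])"
    by (simp add: stp_eq grp_def fn_def crepB1 psi_one)
  have "evw [Tinv, Gen x, T] (\<one>, []) = stp False (x, [(True, \<one>)])"
    using x by (simp add: s1 actG_def)
  also have "\<dots> = (if crep A x = \<one> then (phi (x \<otimes> inv (crep A x)) \<otimes> \<one>, [])
      else (phi (x \<otimes> inv (crep A x)), [(False, crep A x), (True, \<one>)]))"
    by (simp add: stp_eq grp_def fn_def)
  finally have "(if crep A x = \<one> then (phi (x \<otimes> inv (crep A x)) \<otimes> \<one>, [])
      else (phi (x \<otimes> inv (crep A x)), [(False, crep A x), (True, \<one>)])) = (z, [])"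
    using ev z by (simp add: actG_def)
  then have c1: "crep A x = \<one>" and zz: "phi (x \<otimes> inv (crep A x)) \<otimes> \<one> = z"
    by (auto split: if_splits)
  have xA: "x \<in> A" using crep_one_iff[OF subA x] c1 by simp
  have "phi x \<in> carrier G" using phiB[OF xA] B_carr by blast
  then show ?thesis using xA zz c1 x by simp
qed

lemma B2: assumes x: "x \<in> carrier G" and z: "z \<in> carrier G" and e: "tt \<cdot> emb x \<cdot> ti = emb z"
  shows "x \<in> B \<and> z = psi x"
proof -
  have "cls [T, Gen x, Tinv] = cls [Gen z]" using e three[OF x] by (simp add: hnn_emb_def)
  then have "E [T, Gen x, Tinv] [Gen z]" using cls_eq x z by (simp add: hnn_words_def)
  then have ev: "evw [T, Gen x, Tinv] (\<one>, []) = evw [Gen z] (\<one>, [])" using inv_main x0_valid by blast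
  have s1: "stp False (\<one>, []) = (\<one>, [(False, \<one>)])"
    by (simp add: stp_eq grp_def fn_def crepA1 phi_one)
  have "evw [T, Gen x, Tinv] (\<one>, []) = stp True (x, [(False, \<one>)])"
    using x by (simp add: s1 actG_def)
  also have "\<dots> = (if crep B x = \<one> then (psi (x \<otimes> inv (crep B x)) \<otimes> \<one>, [])
      else (psi (x \<otimes> inv (crep B x)), [(True, crep B x), (False, \<one>)]))"
    by (simp add: stp_eq grp_def fn_def)
  finally have "(if crep B x = \<one> then (psi (x \<otimes> inv (crep B x)) \<otimes> \<one>, [])
      else (psi (x \<otimes> inv (crep B x)), [(True, crep B x), (False, \<one>)])) = (z, [])"
    using ev z by (simp add: actG_def)
  then have c1: "crep B x = \<one>" and zz: "psi (x \<otimes> inv (crep B x)) \<otimes> \<one> = z"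
    by (auto split: if_splits)
  have xB: "x \<in> B" using crep_one_iff[OF subB x] c1 by simp
  have "psi x \<in> carrier G" using psiA[OF xB] A_carr by blast
  then show ?thesis using xB zz c1 x by simp
qed

end



context hnn_loc
begin

definition cj :: "int \<Rightarrow> 'g hnn_letter list set \<Rightarrow> 'g hnn_letter list set" where
  "cj i y = tt [^]\<^bsub>HG\<^esub> i \<cdot> y \<cdot> tt [^]\<^bsub>HG\<^esub> (- i)"

lemma cj_0: "y \<in> carrier HG \<Longrightarrow> cj 0 y = y"
proof -
  interpret H: group HG by (rule HG_group)
  show "y \<in> carrier HG \<Longrightarrow> cj 0 y = y" by (simp add: cj_def)
qed

lemma cj_carr: "y \<in> carrier HG \<Longrightarrow> cj i y \<in> carrier HG"
proof -
  interpret H: group HG by (rule HG_group)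
  show "y \<in> carrier HG \<Longrightarrow> cj i y \<in> carrier HG" using tt_carr by (simp add: cj_def)
qed

lemma cj_plus: assumes y: "y \<in> carrier HG" shows "cj (i + 1) y = tt \<cdot> cj i y \<cdot> ti"
proof -
  interpret H: group HG by (rule HG_group)
  have "tt [^]\<^bsub>HG\<^esub> (i + 1) = tt \<cdot> tt [^]\<^bsub>HG\<^esub> i"
    using H.int_pow_mult[OF tt_carr, of 1 i] tt_carr by (simp add: add.commute)
  moreover have "tt [^]\<^bsub>HG\<^esub> (- (i + 1)) = tt [^]\<^bsub>HG\<^esub> (- i) \<cdot> ti"
    using H.int_pow_mult[OF tt_carr, of "- i" "- 1"] H.int_pow_neg[OF tt_carr, of 1] tt_carr tt_inv
    by simp
  ultimately show ?thesis using y tt_carr ti_carr by (simp add: cj_def H.m_assoc)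
qed

lemma cj_minus: assumes y: "y \<in> carrier HG" shows "cj (i - 1) y = ti \<cdot> cj i y \<cdot> tt"
proof -
  interpret H: group HG by (rule HG_group)
  have "tt [^]\<^bsub>HG\<^esub> (i - 1) = ti \<cdot> tt [^]\<^bsub>HG\<^esub> i"
    using H.int_pow_mult[OF tt_carr, of "- 1" i] H.int_pow_neg[OF tt_carr, of 1] tt_carr tt_inv
    by (simp add: add.commute)
  moreover have "tt [^]\<^bsub>HG\<^esub> (- (i - 1)) = tt [^]\<^bsub>HG\<^esub> (- i) \<cdot> tt"
    using H.int_pow_mult[OF tt_carr, of "- i" 1] tt_carr by simp
  ultimately show ?thesis using y tt_carr ti_carr by (simp add: cj_def H.m_assoc)
qed

lemma mem_conj: assumes y: "y \<in> carrier HG"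
  shows "y \<in> {tt [^]\<^bsub>HG\<^esub> (- i) \<cdot> x \<cdot> tt [^]\<^bsub>HG\<^esub> i | x. x \<in> emb ` carrier G}
     \<longleftrightarrow> cj i y \<in> emb ` carrier G"
proof -
  interpret H: group HG by (rule HG_group)
  let ?P = "tt [^]\<^bsub>HG\<^esub> i" and ?Q = "tt [^]\<^bsub>HG\<^esub> (- i)"
  have P: "?P \<in> carrier HG" and Q: "?Q \<in> carrier HG" using tt_carr by auto
  have PQ: "?P \<cdot> ?Q = \<one>\<^bsub>HG\<^esub>" using H.int_pow_mult[OF tt_carr, of i "- i"] by simp
  have QP: "?Q \<cdot> ?P = \<one>\<^bsub>HG\<^esub>" using H.int_pow_mult[OF tt_carr, of "- i" i] by simp
  have k1: "a \<cdot> (b \<cdot> z) = z" if "a \<cdot> b = \<one>\<^bsub>HG\<^esub>" "a \<in> carrier HG" "b \<in> carrier HG" "z \<in> carrier HG" for a b z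
    using that by (simp add: H.m_assoc[symmetric])
  have k2: "z \<cdot> a \<cdot> b = z" if "a \<cdot> b = \<one>\<^bsub>HG\<^esub>" "a \<in> carrier HG" "b \<in> carrier HG" "z \<in> carrier HG" for a b z
    using that by (simp add: H.m_assoc)
  show ?thesis
  proof
    assume "y \<in> {?Q \<cdot> x \<cdot> ?P | x. x \<in> emb ` carrier G}"
    then obtain x where x: "x \<in> emb ` carrier G" "y = ?Q \<cdot> x \<cdot> ?P" by blast
    have xc: "x \<in> carrier HG" using x(1) emb_carr by blast
    have "cj i y = ?P \<cdot> (?Q \<cdot> (x \<cdot> ?P)) \<cdot> ?Q" using x(2) P Q xc by (simp add: cj_def H.m_assoc)
    also have "\<dots> = x \<cdot> ?P \<cdot> ?Q" using k1[OF PQ P Q] P Q xc by simp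
    also have "\<dots> = x" using k2[OF PQ P Q xc] .
    finally show "cj i y \<in> emb ` carrier G" using x(1) by simp
  next
    assume c: "cj i y \<in> emb ` carrier G"
    have "?Q \<cdot> cj i y \<cdot> ?P = ?Q \<cdot> (?P \<cdot> (y \<cdot> ?Q)) \<cdot> ?P" using P Q y by (simp add: cj_def H.m_assoc)
    also have "\<dots> = y \<cdot> ?Q \<cdot> ?P" using k1[OF QP Q P] P Q y by simp
    also have "\<dots> = y" using k2[OF QP Q P y] .
    finally show "y \<in> {?Q \<cdot> x \<cdot> ?P | x. x \<in> emb ` carrier G}" using c by blast
  qed
qed

lemma pos_iter: assumes g: "g \<in> Hc"
  shows "cj (int k) (emb g) = emb ((psi ^^ k) g) \<and> (psi ^^ k) g \<in> Hc"
proof (induction k)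
  case 0 then show ?case using g cj_0 emb_carr Hc_carr by auto
next
  case (Suc k)
  let ?h = "(psi ^^ k) g"
  have h: "?h \<in> Hc" using Suc by blast
  have hB: "?h \<in> B" by (rule Hc_B[OF h])
  have gc: "emb g \<in> carrier HG" using emb_carr g Hc_carr by blast
  have "cj (int (Suc k)) (emb g) = cj (int k + 1) (emb g)" by (simp add: add.commute)
  also have "\<dots> = tt \<cdot> emb ?h \<cdot> ti" using cj_plus[OF gc] Suc by simp
  also have "\<dots> = tt \<cdot> emb (phi (psi ?h)) \<cdot> ti" using phi_psi[OF hB] by simp
  also have "\<dots> = emb (psi ?h)" by (rule R2[OF psiA[OF hB]])
  finally show ?case using Hc_psi[OF h] by simp
qed

lemma neg_iter: assumes g: "g \<in> Hc"
  shows "cj (- int k) (emb g) = emb ((phi ^^ k) g) \<and> (phi ^^ k) g \<in> Hc"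
proof (induction k)
  case 0 then show ?case using g cj_0 emb_carr Hc_carr by auto
next
  case (Suc k)
  let ?h = "(phi ^^ k) g"
  have h: "?h \<in> Hc" using Suc by blast
  have hA: "?h \<in> A" by (rule Hc_A[OF h])
  have gc: "emb g \<in> carrier HG" using emb_carr g Hc_carr by blast
  have "cj (- int (Suc k)) (emb g) = cj (- int k - 1) (emb g)"
    by (rule arg_cong[where f="\<lambda>i. cj i (emb g)"]) linarith
  also have "\<dots> = ti \<cdot> emb ?h \<cdot> tt" using cj_minus[OF gc] Suc by simp
  also have "\<dots> = emb (phi ?h)" by (rule R1[OF hA])
  finally show ?case using Hc_phi[OF h] by simp
qed

lemma part2:
  "emb ` Hc = (\<Inter>i::int. {tt [^]\<^bsub>HG\<^esub> (- i) \<cdot> x \<cdot> tt [^]\<^bsub>HG\<^esub> i | x. x \<in> emb ` carrier G})"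
proof (rule equalityI; rule subsetI)
  fix y assume "y \<in> emb ` Hc"
  then obtain g where g: "g \<in> Hc" "y = emb g" by blast
  have gc: "g \<in> carrier G" using g Hc_carr by blast
  have yc: "y \<in> carrier HG" using g emb_carr[OF gc] by simp
  show "y \<in> (\<Inter>i::int. {tt [^]\<^bsub>HG\<^esub> (- i) \<cdot> x \<cdot> tt [^]\<^bsub>HG\<^esub> i | x. x \<in> emb ` carrier G})"
  proof (rule INT_I)
    fix i :: int assume "i \<in> UNIV"
    have "cj i y \<in> emb ` carrier G"
    proof (cases "0 \<le> i")
      case True
      then obtain k where k: "i = int k" using nonneg_int_cases by blast
      have "cj i y = emb ((psi ^^ k) g)" "(psi ^^ k) g \<in> carrier G"
        using pos_iter[OF g(1), of k] k g(2) Hc_carr by auto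
      then show ?thesis by (metis image_eqI)
    next
      case False
      then have "i = - int (nat (- i))" by simp
      then obtain k where k: "i = - int k" by blast
      have "cj i y = emb ((phi ^^ k) g)" "(phi ^^ k) g \<in> carrier G"
        using neg_iter[OF g(1), of k] k g(2) Hc_carr by auto
      then show ?thesis by (metis image_eqI)
    qed
    then show "y \<in> {tt [^]\<^bsub>HG\<^esub> (- i) \<cdot> x \<cdot> tt [^]\<^bsub>HG\<^esub> i | x. x \<in> emb ` carrier G}"
      by (rule mem_conj[OF yc, THEN iffD2])
  qed
next
  fix y assume y: "y \<in> (\<Inter>i::int. {tt [^]\<^bsub>HG\<^esub> (- i) \<cdot> x \<cdot> tt [^]\<^bsub>HG\<^esub> i | x. x \<in> emb ` carrier G})"
  have yi: "y \<in> {tt [^]\<^bsub>HG\<^esub> (- i) \<cdot> x \<cdot> tt [^]\<^bsub>HG\<^esub> i | x. x \<in> emb ` carrier G}" for i :: int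
    using y unfolding INT_iff by (rule bspec) (rule UNIV_I)
  have y0: "y \<in> {tt [^]\<^bsub>HG\<^esub> (- (0::int)) \<cdot> x \<cdot> tt [^]\<^bsub>HG\<^esub> (0::int) | x. x \<in> emb ` carrier G}" by (rule yi)
  interpret H: group HG by (rule HG_group)
  from y0 obtain x where x: "x \<in> emb ` carrier G" "y = tt [^]\<^bsub>HG\<^esub> (- (0::int)) \<cdot> x \<cdot> tt [^]\<^bsub>HG\<^esub> (0::int)" by blast
  have "y = x" using x emb_carr by auto
  then obtain g where g: "g \<in> carrier G" "y = emb g" using x by blast
  have yc: "y \<in> carrier HG" using g emb_carr by simp
  have allc: "cj i y \<in> emb ` carrier G" for i
    by (rule mem_conj[OF yc, THEN iffD1, OF yi])
  have P: "pd k g \<and> (phi ^^ k) g \<in> carrier G \<and> cj (- int k) y = emb ((phi ^^ k) g)" for k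
  proof (induction k)
    case 0 then show ?case using g cj_0[OF yc] by simp
  next
    case (Suc k)
    let ?h = "(phi ^^ k) g"
    have "cj (- int (Suc k)) y = cj (- int k - 1) y"
      by (rule arg_cong[where f="\<lambda>i. cj i y"]) linarith
    also have "\<dots> = ti \<cdot> emb ?h \<cdot> tt" using cj_minus[OF yc] Suc by simp
    finally have e: "cj (- int (Suc k)) y = ti \<cdot> emb ?h \<cdot> tt" .
    obtain z where z: "z \<in> carrier G" "cj (- int (Suc k)) y = emb z" using allc by blast
    have hz: "?h \<in> A \<and> z = phi ?h" using B1[of ?h z] Suc z e by simp
    have "pd (Suc k) g" using pd_Suc_right[of A phi k g] Suc hz by blast
    moreover have "(phi ^^ Suc k) g = phi ?h" by simp
    moreover have "phi ?h \<in> carrier G" using phiB hz B_carr by blast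
    ultimately show ?case using z hz by simp
  qed
  have N: "nd k g \<and> (psi ^^ k) g \<in> carrier G \<and> cj (int k) y = emb ((psi ^^ k) g)" for k
  proof (induction k)
    case 0 then show ?case using g cj_0[OF yc] by simp
  next
    case (Suc k)
    let ?h = "(psi ^^ k) g"
    have "cj (int (Suc k)) y = cj (int k + 1) y" by (simp add: add.commute)
    also have "\<dots> = tt \<cdot> emb ?h \<cdot> ti" using cj_plus[OF yc] Suc by simp
    finally have e: "cj (int (Suc k)) y = tt \<cdot> emb ?h \<cdot> ti" .
    obtain z where z: "z \<in> carrier G" "cj (int (Suc k)) y = emb z" using allc by blast
    have hz: "?h \<in> B \<and> z = psi ?h" using B2[of ?h z] Suc z e by simp
    have "nd (Suc k) g" using nd_Suc_right[of A B phi k g, folded psi_def] Suc hz by blast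
    moreover have "(psi ^^ Suc k) g = psi ?h" by simp
    moreover have "psi ?h \<in> carrier G" using psiA hz A_carr by blast
    ultimately show ?case using z hz by simp
  qed
  have "g \<in> Hc" using P N by (intro HcI) blast
  then show "y \<in> emb ` Hc" using g by blast
qed

end

theorem lemma2p1:
  fixes G :: "'g monoid" and A B :: "'g set" and phi :: "'g \<Rightarrow> 'g"
  assumes "group G" and "subgroup A G" and "subgroup B G"
    and "phi \<in> hom (G\<lparr>carrier := A\<rparr>) (G\<lparr>carrier := B\<rparr>)"
    and "bij_betw phi A B"
  shows "(subgroup (hnn_core A B phi) G \<and> hnn_core A B phi \<subseteq> A
          \<and> phi ` hnn_core A B phi = hnn_core A B phi
          \<and> (\<forall>K. subgroup K G \<and> K \<subseteq> A \<and> phi ` K = K \<longrightarrow> K \<subseteq> hnn_core A B phi))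
     \<and> hnn_emb G A phi ` hnn_core A B phi =
         (\<Inter>i::int. {hnn_t G A phi [^]\<^bsub>HNN G A phi\<^esub> (- i) \<otimes>\<^bsub>HNN G A phi\<^esub> x
                        \<otimes>\<^bsub>HNN G A phi\<^esub> hnn_t G A phi [^]\<^bsub>HNN G A phi\<^esub> i
                     | x. x \<in> hnn_emb G A phi ` carrier G})
     \<and> hnn_core A B phi = {g \<in> carrier G. \<forall>j::int. phi_defined A B phi j g}
     \<and> (finite A \<longrightarrow> (\<exists>r::nat. \<forall>s\<ge>r.
          hnn_core A B phi = {g \<in> carrier G. \<forall>j::nat. j \<le> s \<longrightarrow> phi_defined A B phi (int j) g}))"
proof -
  have L: "hnn_loc G A B phi"
    unfolding hnn_loc_def hnn_loc_axioms_def using assms by blast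
  interpret L: hnn_loc G A B phi by (rule L)
  have c: "hnn_core A B phi = L.Hc" by (rule L.core_eq)
  have m: "\<forall>K. subgroup K G \<and> K \<subseteq> A \<and> phi ` K = K \<longrightarrow> K \<subseteq> L.Hc"
    using L.Hc_max by blast
  show ?thesis unfolding c
  proof (intro conjI)
    show "subgroup L.Hc G" by (rule L.Hc_subgroup)
    show "L.Hc \<subseteq> A" by (rule L.Hc_sub_A)
    show "phi ` L.Hc = L.Hc" by (rule L.Hc_image)
    show "\<forall>K. subgroup K G \<and> K \<subseteq> A \<and> phi ` K = K \<longrightarrow> K \<subseteq> L.Hc" by (rule m)
  qed (rule L.part2, rule L.part3, use L.part4 in blast)
qed

end
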